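(* Let $n\ge 1$ and sample coupons $G_1,\dots,G_n$ independently with replacement, each sampling drawing each coupon with probability $1/n$. Let $A$ be a positive integer with $A\le n$, and let integers $k_1,\dots,k_A$ and $m_1,\dots,m_A$ satisfy $1\le k_1<\dots<k_A\le n$ and $\infty=m_0>m_1>\dots>m_A>m_{A+1}=0$; set $k_{A+1}=n$. Let $U(\mathbf{m},\mathbf{k})$ be the number of samplings needed until, for every $j=1,\dots,A$, the number of distinct coupons of which at least $m_j$ copies have been collected is at least $k_j$. For $k=k_1,k_1+1,\dots,n$ let $\phi_{0,k}(x)=\bigl[(S_{m_0}(x)-S_{m_1}(x))e^{-x}\bigr]^k$, and for $j=1,\dots,A$ and $k=k_{j+1},k_{j+1}+1,\dots,n$ let \[ \phi_{j,k}(x)=\sum_{w=k_j}^{k}\binom{k}{w}\bigl[(S_{m_j}(x)-S_{m_{j+1}}(x))e^{-x}\bigr]^{k-w}\phi_{j-1,w}(x). \] Then $E[U(\mathbf{m},\mathbf{k})]=n\int_0^\infty\bigl(1-\phi_{A,n}(x)\bigr)dx$.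
   Context: For an integer $m\ge1$, $S_m(x)=\sum_{j=0}^{m-1}\frac{x^j}{j!}$; $S_m(x)=0$ for $m\le 0$; and $S_\infty(x)=e^x$ (so $S_{m_0}(x)=e^x$). *)

theory Defs
  imports "HOL-Probability.Probability"
begin

fun S :: "enat \<Rightarrow> real \<Rightarrow> real" where
  "S (enat m) x = (\<Sum>j<m. x ^ j / fact j)"
| "S \<infinity> x = exp x"

text \<open>phi m k j kk x = \<phi>_{j,kk}(x) from the paper (m indexed 0..A+1, k indexed 1..A+1).\<close>
fun phi :: "(nat \<Rightarrow> enat) \<Rightarrow> (nat \<Rightarrow> nat) \<Rightarrow> nat \<Rightarrow> nat \<Rightarrow> real \<Rightarrow> real" where
  "phi m k 0 kk x = ((S (m 0) x - S (m 1) x) * exp (- x)) ^ kk"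
| "phi m k (Suc j) kk x =
     (\<Sum>w = k (Suc j)..kk. real (kk choose w)
        * ((S (m (Suc j)) x - S (m (Suc (Suc j))) x) * exp (- x)) ^ (kk - w)
        * phi m k j w x)"

definition goal_reached :: "nat \<Rightarrow> nat \<Rightarrow> (nat \<Rightarrow> enat) \<Rightarrow> (nat \<Rightarrow> nat) \<Rightarrow> nat stream \<Rightarrow> nat \<Rightarrow> bool" where
  "goal_reached n A m k \<omega> t \<longleftrightarrow>
     (\<forall>j\<in>{1..A}. card {c\<in>{..<n}. m j \<le> enat (count (mset (stake t \<omega>)) c)} \<ge> k j)"

definition U :: "nat \<Rightarrow> nat \<Rightarrow> (nat \<Rightarrow> enat) \<Rightarrow> (nat \<Rightarrow> nat) \<Rightarrow> nat stream \<Rightarrow> ennreal" where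
  "U n A m k \<omega> = (if \<exists>t. goal_reached n A m k \<omega> t
                   then of_nat (LEAST t. goal_reached n A m k \<omega> t) else \<top>)"

definition coupon_space :: "nat \<Rightarrow> nat stream measure" where
  "coupon_space n = stream_space (measure_pmf (pmf_of_set {..<n}))"

end

theory Submission
  imports Defs "HOL-Combinatorics.Multiset_Permutations"
begin

definition cnd :: "(nat \<Rightarrow> nat) \<Rightarrow> nat \<Rightarrow> nat set \<Rightarrow> (nat \<Rightarrow> nat) \<Rightarrow> bool" where
  "cnd k j I g \<longleftrightarrow> (\<forall>j'\<in>{1..j}. k j' \<le> card {i\<in>I. g i < j'})"

lemma phi_comb:
  fixes x :: real and m :: "nat \<Rightarrow> enat" and k :: "nat \<Rightarrow> nat"
  defines "a \<equiv> \<lambda>j. (S (m j) x - S (m (Suc j)) x) * exp (- x)"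
  shows "finite I \<Longrightarrow> phi m k j (card I) x =
     (\<Sum>g\<in>{g\<in>PiE I (\<lambda>_. {..j}). cnd k j I g}. \<Prod>i\<in>I. a (g i))"
proof (induction j arbitrary: I)
  case 0
  have "{g\<in>PiE I (\<lambda>_. {..0::nat}). cnd k 0 I g} = {(\<lambda>i. if i \<in> I then 0 else undefined)}"
    by (auto simp: cnd_def PiE_def extensional_def fun_eq_iff)
  then show ?case using 0 by (simp add: a_def)
next
  case (Suc j)
  let ?G = "{g\<in>PiE I (\<lambda>_. {..Suc j}). cnd k (Suc j) I g}"
  let ?F = "\<lambda>g. \<Prod>i\<in>I. a (g i)"
  let ?T = "{W. W \<subseteq> I \<and> k (Suc j) \<le> card W}"
  let ?H = "\<lambda>W. {h\<in>PiE W (\<lambda>_. {..j}). cnd k j W h}"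
  define ext where "ext = (\<lambda>W h i. if i \<in> W then h i else if i \<in> I then Suc j else undefined)"
  have finG: "finite ?G" using Suc.prems by (intro finite_subset[OF _ finite_PiE[of I "\<lambda>_. {..Suc j}"]]) auto
  have finT: "finite ?T" using Suc.prems by auto
  have cndeq: "cnd k j I g \<longleftrightarrow> cnd k j {i\<in>I. g i \<le> j} h"
    if "\<And>i. i \<in> I \<Longrightarrow> g i \<le> j \<Longrightarrow> h i = g i" for g h
  proof -
    have "{i\<in>I. g i < j'} = {i\<in>{i\<in>I. g i \<le> j}. h i < j'}" if "j' \<le> j" for j'
      using that \<open>\<And>i. i \<in> I \<Longrightarrow> g i \<le> j \<Longrightarrow> h i = g i\<close> by force
    then show ?thesis unfolding cnd_def by auto
  qed
  have cndS: "cnd k (Suc j) I g \<longleftrightarrow> cnd k j I g \<and> k (Suc j) \<le> card {i\<in>I. g i \<le> j}" for g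
  proof -
    have "{i\<in>I. g i < Suc j} = {i\<in>I. g i \<le> j}" by auto
    have "(\<forall>j'\<in>{1..Suc j}. P j') \<longleftrightarrow> (\<forall>j'\<in>{1..j}. P j') \<and> P (Suc j)" for P :: "nat \<Rightarrow> bool"
    proof
      assume H: "\<forall>j'\<in>{1..Suc j}. P j'"
      have "Suc j \<in> {1..Suc j}" by simp
      thus "(\<forall>j'\<in>{1..j}. P j') \<and> P (Suc j)" using H by auto
    qed (auto simp: le_Suc_eq)
    then show ?thesis unfolding cnd_def using \<open>{i\<in>I. g i < Suc j} = {i\<in>I. g i \<le> j}\<close> by simp
  qed
  have img: "(\<lambda>g. {i\<in>I. g i \<le> j}) ` ?G \<subseteq> ?T" using cndS by auto
  have "(\<Sum>g\<in>?G. ?F g) = (\<Sum>W\<in>?T. \<Sum>g\<in>{g\<in>?G. {i\<in>I. g i \<le> j} = W}. ?F g)"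
    by (rule sum.group[OF finG finT img, symmetric])
  also have "\<dots> = (\<Sum>W\<in>?T. a (Suc j) ^ (card I - card W) * phi m k j (card W) x)"
  proof (rule sum.cong[OF refl])
    fix W assume W: "W \<in> ?T"
    hence WI: "W \<subseteq> I" and fW: "finite W" using Suc.prems finite_subset by auto
    have eqset: "{g\<in>?G. {i\<in>I. g i \<le> j} = W} = ext W ` ?H W"
    proof
      show "{g\<in>?G. {i\<in>I. g i \<le> j} = W} \<subseteq> ext W ` ?H W"
      proof
        fix g assume g: "g \<in> {g\<in>?G. {i\<in>I. g i \<le> j} = W}"
        have "g = ext W (restrict g W)"
          using g WI by (auto simp: ext_def fun_eq_iff PiE_def extensional_def le_Suc_eq)
        moreover have "restrict g W \<in> ?H W"
        proof -
          have "cnd k j I g" using g cndS by auto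
          hence "cnd k j W (restrict g W)" using cndeq[of g "restrict g W"] g by auto
          thus ?thesis using g by auto
        qed
        ultimately show "g \<in> ext W ` ?H W" by blast
      qed
    next
      show "ext W ` ?H W \<subseteq> {g\<in>?G. {i\<in>I. g i \<le> j} = W}"
      proof
        fix g assume "g \<in> ext W ` ?H W"
        then obtain h where h: "h \<in> ?H W" and g: "g = ext W h" by auto
        have Wg: "{i\<in>I. g i \<le> j} = W" using h WI by (auto simp: g ext_def PiE_def Pi_def)
        have hg: "h i = g i" if "i \<in> I" "g i \<le> j" for i
          using that by (auto simp: g ext_def split: if_splits)
        have "cnd k j I g" using cndeq[of g h, OF hg] h Wg by auto
        hence "cnd k (Suc j) I g" using cndS Wg W by auto
        moreover have "g \<in> PiE I (\<lambda>_. {..Suc j})" using h WI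
          by (auto simp: g ext_def PiE_def Pi_def extensional_def)
        ultimately show "g \<in> {g\<in>?G. {i\<in>I. g i \<le> j} = W}" using Wg by auto
      qed
    qed
    have inj: "inj_on (ext W) (?H W)"
    proof (rule inj_onI)
      fix h1 h2 assume "h1 \<in> ?H W" "h2 \<in> ?H W" "ext W h1 = ext W h2"
      thus "h1 = h2" by (auto simp: ext_def fun_eq_iff PiE_def extensional_def) metis
    qed
    have Fext: "?F (ext W h) = a (Suc j) ^ (card I - card W) * (\<Prod>i\<in>W. a (h i))" for h
    proof -
      have "?F (ext W h) = (\<Prod>i\<in>I - W. a (ext W h i)) * (\<Prod>i\<in>W. a (ext W h i))"
        using Suc.prems WI by (simp add: prod.subset_diff)
      also have "(\<Prod>i\<in>I - W. a (ext W h i)) = (\<Prod>i\<in>I - W. a (Suc j))"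
        by (rule prod.cong) (auto simp: ext_def)
      also have "\<dots> = a (Suc j) ^ (card I - card W)"
        using Suc.prems WI fW by (simp add: card_Diff_subset)
      also have "(\<Prod>i\<in>W. a (ext W h i)) = (\<Prod>i\<in>W. a (h i))"
        by (rule prod.cong) (auto simp: ext_def)
      finally show ?thesis .
    qed
    have "(\<Sum>g\<in>{g\<in>?G. {i\<in>I. g i \<le> j} = W}. ?F g) = (\<Sum>h\<in>?H W. ?F (ext W h))"
      unfolding eqset by (rule sum.reindex[OF inj, unfolded comp_def])
    also have "\<dots> = a (Suc j) ^ (card I - card W) * (\<Sum>h\<in>?H W. \<Prod>i\<in>W. a (h i))"
      by (simp add: Fext sum_distrib_left)
    also have "\<dots> = a (Suc j) ^ (card I - card W) * phi m k j (card W) x"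
      using Suc.IH[OF fW] by simp
    finally show "(\<Sum>g\<in>{g\<in>?G. {i\<in>I. g i \<le> j} = W}. ?F g) = a (Suc j) ^ (card I - card W) * phi m k j (card W) x" .
  qed
  also have "\<dots> = (\<Sum>w\<in>{k (Suc j)..card I}. \<Sum>W\<in>{W\<in>?T. card W = w}. a (Suc j) ^ (card I - card W) * phi m k j (card W) x)"
    using Suc.prems by (intro sum.group[symmetric] finT) (auto intro: card_mono)
  also have "\<dots> = (\<Sum>w\<in>{k (Suc j)..card I}. real (card I choose w) * a (Suc j) ^ (card I - w) * phi m k j w x)"
  proof (rule sum.cong[OF refl])
    fix w assume w: "w \<in> {k (Suc j)..card I}"
    have "{W\<in>?T. card W = w} = {W. W \<subseteq> I \<and> card W = w}" using w by auto
    then show "(\<Sum>W\<in>{W\<in>?T. card W = w}. a (Suc j) ^ (card I - card W) * phi m k j (card W) x) =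
       real (card I choose w) * a (Suc j) ^ (card I - w) * phi m k j w x"
      using n_subsets[OF Suc.prems, of w] by simp
  qed
  also have "\<dots> = phi m k (Suc j) (card I) x" by (simp add: a_def)
  finally show ?case by simp
qed

definition lev :: "(nat \<Rightarrow> enat) \<Rightarrow> nat \<Rightarrow> nat" where
  "lev m c = (LEAST j. m (Suc j) \<le> enat c)"

definition goodc :: "nat \<Rightarrow> nat \<Rightarrow> (nat \<Rightarrow> enat) \<Rightarrow> (nat \<Rightarrow> nat) \<Rightarrow> (nat \<Rightarrow> nat) \<Rightarrow> bool" where
  "goodc n A m k c \<longleftrightarrow> (\<forall>j\<in>{1..A}. k j \<le> card {i\<in>{..<n}. m j \<le> enat (c i)})"

context
  fixes m :: "nat \<Rightarrow> enat" and A :: nat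
  assumes m0: "m 0 = \<infinity>" and mA: "m (Suc A) = 0" and dec: "\<And>j. j \<le> A \<Longrightarrow> m (Suc j) < m j"
begin

lemma m_mono: "j < j' \<Longrightarrow> j' \<le> Suc A \<Longrightarrow> m j' < m j"
proof (induction j')
  case 0 then show ?case by simp
next
  case (Suc j')
  have "m (Suc j') < m j'" using dec Suc.prems by simp
  then show ?case using Suc by (cases "j = j'") auto
qed

lemma lev_le: "lev m c \<le> A"
  unfolding lev_def using mA by (intro Least_le) simp

lemma lev_iff: "j' \<le> Suc A \<Longrightarrow> m j' \<le> enat c \<longleftrightarrow> lev m c < j'"
proof -
  assume j': "j' \<le> Suc A"
  let ?l = "lev m c"
  have ml: "m (Suc ?l) \<le> enat c" unfolding lev_def by (rule LeastI[of _ A]) (simp add: mA)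
  have nl: "\<not> m (Suc j'') \<le> enat c" if "j'' < ?l" for j''
    using that unfolding lev_def by (rule not_less_Least)
  show ?thesis
  proof
    assume a: "m j' \<le> enat c"
    show "?l < j'"
    proof (rule ccontr)
      assume "\<not> ?l < j'"
      hence "j' \<le> ?l" by simp
      show False
      proof (cases j')
        case 0 then show False using a m0 by simp
      next
        case (Suc j'')
        hence "j'' < ?l" using \<open>j' \<le> ?l\<close> by simp
        then show False using nl[of j''] a Suc by simp
      qed
    qed
  next
    assume "?l < j'"
    hence "Suc ?l \<le> j'" by simp
    have "m j' \<le> m (Suc ?l)"
    proof (cases "Suc ?l = j'")
      case True thus ?thesis by simp
    next
      case False
      hence "Suc ?l < j'" using \<open>Suc ?l \<le> j'\<close> by simp
      thus ?thesis using m_mono[of "Suc ?l" j'] j' by simp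
    qed
    thus "m j' \<le> enat c" using ml by simp
  qed
qed

lemma lev_set: "j \<le> A \<Longrightarrow> {c. lev m c = j} = {c. enat c < m j} - {c. enat c < m (Suc j)}"
proof -
  assume j: "j \<le> A"
  have a: "enat c < m j \<longleftrightarrow> \<not> lev m c < j" for c
    using lev_iff[of j c] j by (metis le_SucI not_le)
  have b: "enat c < m (Suc j) \<longleftrightarrow> \<not> lev m c < Suc j" for c
    using lev_iff[of "Suc j" c] j by (metis Suc_le_mono not_le)
  show ?thesis using a b by auto
qed

end

lemma S_has_sum:
  assumes "0 \<le> x"
  shows "((\<lambda>c. x ^ c / fact c) has_sum S mm x) {c. enat c < mm}"
proof (cases mm)
  case (enat p)
  have "{c. enat c < mm} = {..<p}" using enat by auto
  then show ?thesis using enat by (simp add: has_sum_finiteI)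
next
  case infinity
  have "(\<lambda>c. x ^ c / fact c) sums exp x" using exp_converges[of x] by (simp add: divide_inverse mult.commute)
  hence "((\<lambda>c. x ^ c / fact c) has_sum exp x) UNIV" using assms by (intro sums_nonneg_imp_has_sum) auto
  then show ?thesis using infinity by simp
qed

definition Bad :: "nat \<Rightarrow> nat \<Rightarrow> (nat \<Rightarrow> enat) \<Rightarrow> (nat \<Rightarrow> nat) \<Rightarrow> nat \<Rightarrow> (nat \<Rightarrow> nat) set" where
  "Bad n A m k t = {c \<in> PiE {..<n} (\<lambda>_. UNIV). \<not> goodc n A m k c \<and> sum c {..<n} = t}"

definition beta :: "nat \<Rightarrow> nat \<Rightarrow> (nat \<Rightarrow> enat) \<Rightarrow> (nat \<Rightarrow> nat) \<Rightarrow> nat \<Rightarrow> real" where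
  "beta n A m k t = (\<Sum>c\<in>Bad n A m k t. 1 / (\<Prod>i<n. fact (c i)))"

lemma mem_Bad: "c \<in> Bad n A m k t \<longleftrightarrow> c \<in> PiE {..<n} (\<lambda>_. UNIV) \<and> \<not> goodc n A m k c \<and> sum c {..<n} = t"
  unfolding Bad_def by (simp only: mem_Collect_eq)

lemma finite_Bad: "finite (Bad n A m k t)"
proof -
  have "Bad n A m k t \<subseteq> PiE {..<n} (\<lambda>_. {..t})"
  proof
    fix c assume c: "c \<in> Bad n A m k t"
    have "c i \<le> t" if "i < n" for i
    proof -
      have "c i \<le> sum c {..<n}" using that by (intro member_le_sum) auto
      thus ?thesis using c by (simp add: Bad_def)
    qed
    thus "c \<in> PiE {..<n} (\<lambda>_. {..t})" using c by (auto simp: Bad_def PiE_def)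
  qed
  thus ?thesis by (rule finite_subset) (auto intro: finite_PiE)
qed

lemma analytic:
  fixes x :: real
  assumes m0: "m 0 = \<infinity>" and mA: "m (Suc A) = 0" and dec: "\<And>j. j \<le> A \<Longrightarrow> m (Suc j) < m j"
    and x: "0 \<le> x"
  shows "(\<lambda>t. exp (- (real n * x)) * (x ^ t * beta n A m k t)) sums (1 - phi m k A n x)"
proof -
  have lev_iff': "m j' \<le> enat c \<longleftrightarrow> lev m c < j'" if "j' \<le> Suc A" for j' c
    by (rule lev_iff[of m A]) (use m0 mA dec that in auto)
  have lev_set': "{c. lev m c = j} = {c. enat c < m j} - {c. enat c < m (Suc j)}" if "j \<le> A" for j
    by (rule lev_set[of m A]) (use m0 mA dec that in auto)
  have lev_le': "lev m c \<le> A" for c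
    by (rule lev_le[of m A]) (use m0 mA dec in auto)
  define f where "f = (\<lambda>c::nat. x ^ c / fact c)"
  have f0: "0 \<le> f c" for c using x by (simp add: f_def)
  define w where "w = (\<lambda>c::nat\<Rightarrow>nat. \<Prod>i<n. f (c i))"
  have w0: "0 \<le> w c" for c unfolding w_def by (simp add: f0 prod_nonneg)
  define UU where "UU = PiE {..<n} (\<lambda>_. UNIV :: nat set)"
  define s where "s = (\<lambda>j. S (m j) x - S (m (Suc j)) x)"
  have hasL: "(f has_sum s j) {c. lev m c = j}" if "j \<le> A" for j
  proof -
    have "(f has_sum (S (m j) x - S (m (Suc j)) x)) ({c. enat c < m j} - {c. enat c < m (Suc j)})"
      using S_has_sum[OF x, of "m j"] S_has_sum[OF x, of "m (Suc j)"] dec[OF that]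
      by (intro has_sum_Diff) (auto simp: f_def)
    thus ?thesis using lev_set'[OF that] by (simp add: s_def)
  qed
  have absL: "(\<lambda>c. norm (f c)) summable_on B" if "B \<subseteq> UNIV" for B
  proof -
    have "(f has_sum exp x) UNIV" using S_has_sum[OF x, of \<infinity>] by (simp add: f_def)
    hence "f summable_on B" using summable_on_subset_banach has_sum_imp_summable by blast
    thus ?thesis using f0 by simp
  qed
  have infL: "infsum f {c. lev m c = j} = s j" if "j \<le> A" for j
    using hasL[OF that] by (rule infsumI)
  have infall: "infsum w UU = exp x ^ n"
  proof -
    have "infsum w UU = (\<Prod>i<n. infsum f UNIV)"
      unfolding w_def UU_def by (rule infsum_prod_PiE_abs) (use absL in auto)
    also have "infsum f UNIV = exp x" using S_has_sum[OF x, of \<infinity>] by (intro infsumI) (simp add: f_def)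
    finally show ?thesis by simp
  qed
  have sumall: "w summable_on UU"
  proof (rule ccontr)
    assume "\<not> w summable_on UU"
    hence "infsum w UU = 0" by (rule infsum_not_exists)
    thus False using infall by simp
  qed
  define B where "B = (\<lambda>g. PiE {..<n} (\<lambda>i. {c. lev m c = g i}))"
  have BU: "B g \<subseteq> UU" for g unfolding B_def UU_def by auto
  define Gd where "Gd = {g\<in>PiE {..<n} (\<lambda>_. {..A}). cnd k A {..<n} g}"
  have finGd: "finite Gd" unfolding Gd_def by (rule finite_subset[OF _ finite_PiE[of "{..<n}" "\<lambda>_. {..A}"]]) auto
  have infB: "infsum w (B g) = (\<Prod>i<n. s (g i))" if "g \<in> Gd" for g
  proof -
    have "infsum w (B g) = (\<Prod>i<n. infsum f {c. lev m c = g i})"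
      unfolding w_def B_def by (rule infsum_prod_PiE_abs) (use absL in auto)
    also have "\<dots> = (\<Prod>i<n. s (g i))"
      using that by (intro prod.cong refl infL) (auto simp: Gd_def PiE_def Pi_def)
    finally show ?thesis .
  qed
  have phi_eq: "phi m k A n x = exp (-x) ^ n * (\<Sum>g\<in>Gd. infsum w (B g))"
  proof -
    have "phi m k A (card {..<n}) x = (\<Sum>g\<in>Gd. \<Prod>i<n. s (g i) * exp (- x))"
      unfolding Gd_def s_def by (rule phi_comb) simp
    also have "\<dots> = (\<Sum>g\<in>Gd. exp (-x) ^ n * (\<Prod>i<n. s (g i)))"
      by (simp add: prod.distrib mult.commute)
    also have "\<dots> = exp (-x) ^ n * (\<Sum>g\<in>Gd. infsum w (B g))"
      by (simp add: sum_distrib_left infB)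
    finally show ?thesis by simp
  qed
  define Good where "Good = {c\<in>UU. goodc n A m k c}"
  have good_iff: "goodc n A m k c \<longleftrightarrow> cnd k A {..<n} (\<lambda>i. lev m (c i))" for c
  proof -
    have "{i\<in>{..<n}. m j \<le> enat (c i)} = {i\<in>{..<n}. lev m (c i) < j}" if "j \<in> {1..A}" for j
      using lev_iff'[of j] that by auto
    thus ?thesis unfolding goodc_def cnd_def by auto
  qed
  have UnB: "(\<Union>g\<in>Gd. B g) = Good"
  proof
    show "(\<Union>g\<in>Gd. B g) \<subseteq> Good"
    proof
      fix c assume "c \<in> (\<Union>g\<in>Gd. B g)"
      then obtain g where g: "g \<in> Gd" and c: "c \<in> B g" by auto
      have "cnd k A {..<n} (\<lambda>i. lev m (c i)) \<longleftrightarrow> cnd k A {..<n} g"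
        unfolding cnd_def using c by (auto simp: B_def PiE_def Pi_def cong: conj_cong)
      hence "goodc n A m k c" using g good_iff by (simp add: Gd_def)
      thus "c \<in> Good" using c BU by (auto simp: Good_def)
    qed
  next
    show "Good \<subseteq> (\<Union>g\<in>Gd. B g)"
    proof
      fix c assume c: "c \<in> Good"
      define g where "g = restrict (\<lambda>i. lev m (c i)) {..<n}"
      have "{i\<in>{..<n}. g i < j'} = {i\<in>{..<n}. lev m (c i) < j'}" for j' by (auto simp: g_def)
      hence "cnd k A {..<n} g \<longleftrightarrow> cnd k A {..<n} (\<lambda>i. lev m (c i))"
        unfolding cnd_def by simp
      hence "g \<in> Gd" using c good_iff lev_le' by (auto simp: Good_def Gd_def g_def)
      moreover have "c \<in> B g" using c by (auto simp: B_def g_def Good_def UU_def PiE_def)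
      ultimately show "c \<in> (\<Union>g\<in>Gd. B g)" by auto
    qed
  qed
  have infGood: "(\<Sum>g\<in>Gd. infsum w (B g)) = infsum w Good"
  proof -
    have "(\<Sum>g\<in>Gd. infsum w (B g)) = infsum w (\<Union>g\<in>Gd. B g)"
    proof (rule sum_infsum[OF finGd])
      show "w summable_on B g" for g using summable_on_subset_banach[OF sumall BU] .
      fix g g' assume "g \<in> Gd" "g' \<in> Gd" "g \<noteq> g'"
      then obtain i where i: "i < n" "g i \<noteq> g' i" by (auto simp: Gd_def PiE_def extensional_def fun_eq_iff) (metis lessThan_iff)
      show "B g \<inter> B g' = {}" using i by (auto simp: B_def PiE_def Pi_def)
    qed
    thus ?thesis using UnB by simp
  qed
  have GoodU: "Good \<subseteq> UU" unfolding Good_def by auto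
  have sumGood: "w summable_on Good" using summable_on_subset_banach[OF sumall GoodU] .
  define BadA where "BadA = UU - Good"
  have infBad: "infsum w BadA = exp x ^ n - infsum w Good"
    unfolding BadA_def using infall by (subst infsum_Diff[OF sumall sumGood GoodU]) simp
  have ee: "exp (-x) ^ n * exp x ^ n = 1" by (simp add: power_mult_distrib[symmetric] exp_minus)
  have one_minus: "1 - phi m k A n x = exp (-x) ^ n * infsum w BadA"
  proof -
    have "1 - phi m k A n x = exp (-x) ^ n * exp x ^ n - exp (-x) ^ n * infsum w Good"
      using phi_eq infGood ee by simp
    thus ?thesis by (simp add: infBad right_diff_distrib)
  qed
  have BadA_eq: "BadA = snd ` (SIGMA t:UNIV. Bad n A m k t)"
  proof (rule set_eqI)
    fix c
    have "c \<in> BadA \<longleftrightarrow> c \<in> Bad n A m k (sum c {..<n})"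
      unfolding BadA_def Good_def UU_def mem_Bad by blast
    moreover have "c \<in> snd ` (SIGMA t:UNIV. Bad n A m k t) \<longleftrightarrow> c \<in> Bad n A m k (sum c {..<n})"
    proof
      assume "c \<in> snd ` (SIGMA t:UNIV. Bad n A m k t)"
      then obtain t where "c \<in> Bad n A m k t" by force
      moreover hence "t = sum c {..<n}" unfolding mem_Bad by blast
      ultimately show "c \<in> Bad n A m k (sum c {..<n})" by simp
    next
      assume "c \<in> Bad n A m k (sum c {..<n})"
      thus "c \<in> snd ` (SIGMA t:UNIV. Bad n A m k t)" by (intro rev_image_eqI[of "(sum c {..<n}, c)"]) simp_all
    qed
    ultimately show "c \<in> BadA \<longleftrightarrow> c \<in> snd ` (SIGMA t:UNIV. Bad n A m k t)" by blast
  qed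
  have inj: "inj_on snd (SIGMA t:UNIV. Bad n A m k t)"
  proof (rule inj_onI)
    fix p q assume p: "p \<in> (SIGMA t:UNIV. Bad n A m k t)" and q: "q \<in> (SIGMA t:UNIV. Bad n A m k t)"
      and e: "snd p = snd q"
    have "fst p = sum (snd p) {..<n}" using p by (cases p) (simp add: mem_Bad)
    moreover have "fst q = sum (snd q) {..<n}" using q by (cases q) (simp add: mem_Bad)
    ultimately show "p = q" using e by (simp add: prod_eq_iff)
  qed
  have sumBadA: "w summable_on BadA"
    using summable_on_subset_banach[OF sumall] unfolding BadA_def by auto
  have sumSig: "(\<lambda>(t, c). w c) summable_on (SIGMA t:UNIV. Bad n A m k t)"
    using sumBadA unfolding BadA_eq summable_on_reindex[OF inj] by (simp add: comp_def case_prod_unfold)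
  have infBad_t: "infsum w (Bad n A m k t) = x ^ t * beta n A m k t" for t
  proof -
    have "w c = x ^ t * (1 / (\<Prod>i<n. fact (c i)))" if "c \<in> Bad n A m k t" for c
    proof -
      have "w c = (\<Prod>i<n. x ^ c i) / (\<Prod>i<n. fact (c i))"
        unfolding w_def f_def by (simp add: prod_dividef)
      also have "(\<Prod>i<n. x ^ c i) = x ^ t" using that power_sum[of x c "{..<n}"] by (simp add: Bad_def)
      finally show ?thesis by simp
    qed
    hence "infsum w (Bad n A m k t) = (\<Sum>c\<in>Bad n A m k t. x ^ t * (1 / (\<Prod>i<n. fact (c i))))"
      using finite_Bad by simp
    thus ?thesis by (simp add: beta_def sum_distrib_left)
  qed
  have "infsum (\<lambda>t. infsum (\<lambda>c. w c) (Bad n A m k t)) UNIV = infsum (\<lambda>(t,c). w c) (SIGMA t:UNIV. Bad n A m k t)"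
    using sumSig by (rule infsum_Sigma'_banach)
  also have "\<dots> = infsum w BadA"
    unfolding BadA_eq by (subst infsum_reindex[OF inj]) (simp add: comp_def case_prod_unfold)
  finally have e1: "infsum (\<lambda>t. x ^ t * beta n A m k t) UNIV = infsum w BadA" using infBad_t by simp
  have "(\<lambda>t. infsum (\<lambda>c. w c) (Bad n A m k t)) summable_on UNIV"
    using sumSig by (rule summable_on_Sigma_banach)
  hence "((\<lambda>t. x ^ t * beta n A m k t) has_sum infsum w BadA) UNIV"
    using e1 infBad_t by (metis (no_types, lifting) ext has_sum_infsum)
  hence "(\<lambda>t. x ^ t * beta n A m k t) sums infsum w BadA" by (rule has_sum_imp_sums)
  hence "(\<lambda>t. exp (-x) ^ n * (x ^ t * beta n A m k t)) sums (exp (-x) ^ n * infsum w BadA)"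
    by (rule sums_mult)
  moreover have "exp (-x) ^ n = exp (- (real n * x))" by (simp add: exp_of_nat_mult[symmetric])
  ultimately show ?thesis using one_minus by simp
qed

lemma goodc_cong: "(\<And>i. i < n \<Longrightarrow> c i = c' i) \<Longrightarrow> goodc n A m k c = goodc n A m k c'"
proof -
  assume h: "\<And>i. i < n \<Longrightarrow> c i = c' i"
  have "{i\<in>{..<n}. m j \<le> enat (c i)} = {i\<in>{..<n}. m j \<le> enat (c' i)}" for j using h by auto
  thus ?thesis unfolding goodc_def by simp
qed

definition Mc :: "nat \<Rightarrow> (nat \<Rightarrow> nat) \<Rightarrow> nat multiset" where
  "Mc n c = (\<Sum>i<n. replicate_mset (c i) i)"

lemma count_Mc: "count (Mc n c) y = (if y < n then c y else 0)"
proof -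
  have "count (Mc n c) y = (\<Sum>i<n. if y = i then c i else 0)"
    unfolding Mc_def count_sum by (intro sum.cong) auto
  also have "\<dots> = (if y < n then c y else 0)" by (simp add: sum.delta')
  finally show ?thesis .
qed

lemma size_sum_mset': "finite I \<Longrightarrow> size (\<Sum>i\<in>I. f i :: 'a multiset) = (\<Sum>i\<in>I. size (f i))"
  by (induction I rule: finite_induct) auto

lemma size_Mc: "size (Mc n c) = sum c {..<n}"
  unfolding Mc_def by (simp add: size_sum_mset')

lemma mset_eq_Mc:
  assumes c: "c \<in> PiE {..<n} (\<lambda>_. UNIV)"
  shows "mset xs = Mc n c \<longleftrightarrow> set xs \<subseteq> {..<n} \<and> restrict (\<lambda>i. count (mset xs) i) {..<n} = c"
proof
  assume e: "mset xs = Mc n c"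
  have "set xs \<subseteq> {..<n}"
  proof
    fix y assume "y \<in> set xs"
    hence "count (mset xs) y > 0" by simp
    thus "y \<in> {..<n}" using e count_Mc[of n c y] by (auto split: if_splits)
  qed
  moreover have "restrict (\<lambda>i. count (mset xs) i) {..<n} = c"
    using c e by (auto simp: fun_eq_iff count_Mc PiE_def extensional_def)
  ultimately show "set xs \<subseteq> {..<n} \<and> restrict (\<lambda>i. count (mset xs) i) {..<n} = c" by simp
next
  assume h: "set xs \<subseteq> {..<n} \<and> restrict (\<lambda>i. count (mset xs) i) {..<n} = c"
  show "mset xs = Mc n c"
  proof (rule multiset_eqI)
    fix y
    show "count (mset xs) y = count (Mc n c) y"
    proof (cases "y < n")
      case True
      then show ?thesis using h by (auto simp: count_Mc fun_eq_iff dest: spec[of _ y])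
    next
      case False
      hence "y \<notin> set xs" using h by auto
      then show ?thesis using False by (simp add: count_Mc count_mset_0_iff)
    qed
  qed
qed

lemma fact_Mc:
  "(\<Prod>y\<in>set_mset (Mc n c). fact (count (Mc n c) y)) = (\<Prod>i<n. fact (c i) :: nat)"
proof -
  have sub: "set_mset (Mc n c) \<subseteq> {..<n}"
  proof
    fix y assume "y \<in># Mc n c"
    hence "count (Mc n c) y > 0" by simp
    thus "y \<in> {..<n}" using count_Mc[of n c y] by (auto split: if_splits)
  qed
  have "(\<Prod>i<n. fact (c i) :: nat) = (\<Prod>i<n. fact (count (Mc n c) i))"
    by (intro prod.cong) (auto simp: count_Mc)
  also have "\<dots> = (\<Prod>y\<in>set_mset (Mc n c). fact (count (Mc n c) y))"
    using sub by (intro prod.mono_neutral_right) (auto simp: not_in_iff)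
  finally show ?thesis by simp
qed

lemma card_lists_bad:
  "real (card {xs. length xs = t \<and> set xs \<subseteq> {..<n} \<and> \<not> goodc n A m k (\<lambda>i. count (mset xs) i)})
     = fact t * beta n A m k t"
proof -
  define L where "L = {xs. length xs = t \<and> set xs \<subseteq> {..<n} \<and> \<not> goodc n A m k (\<lambda>i. count (mset xs) i)}"
  define cnt where "cnt = (\<lambda>xs. restrict (\<lambda>i. count (mset xs) i) {..<n})"
  have finL: "finite L"
  proof -
    have "L \<subseteq> {xs. set xs \<subseteq> {..<n} \<and> length xs = t}" unfolding L_def by auto
    thus ?thesis by (rule finite_subset) (intro finite_lists_length_eq, simp)
  qed
  have lenxs: "length xs = sum (\<lambda>i. count (mset xs) i) {..<n}" if "set xs \<subseteq> {..<n}" for xs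
  proof -
    have "length xs = size (mset xs)" by simp
    also have "\<dots> = sum (count (mset xs)) (set_mset (mset xs))" by (rule size_multiset_overloaded_eq)
    also have "\<dots> = sum (\<lambda>i. count (mset xs) i) {..<n}"
      using that by (intro sum.mono_neutral_left) auto
    finally show ?thesis .
  qed
  have img: "cnt ` L \<subseteq> Bad n A m k t"
  proof
    fix c assume "c \<in> cnt ` L"
    then obtain xs where xs: "xs \<in> L" and c: "c = cnt xs" by auto
    have "goodc n A m k c = goodc n A m k (\<lambda>i. count (mset xs) i)"
      by (rule goodc_cong) (simp add: c cnt_def)
    moreover have "sum c {..<n} = t" using xs lenxs[of xs] by (simp add: c cnt_def L_def)
    ultimately show "c \<in> Bad n A m k t" using xs by (simp add: mem_Bad c cnt_def L_def)
  qed
  have fib: "{xs\<in>L. cnt xs = c} = permutations_of_multiset (Mc n c)" if c: "c \<in> Bad n A m k t" for c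
  proof -
    have cP: "c \<in> PiE {..<n} (\<lambda>_. UNIV)" and nc: "\<not> goodc n A m k c" and sc: "sum c {..<n} = t"
      using c by (simp_all add: mem_Bad)
    show ?thesis
    proof (rule set_eqI)
      fix xs
      show "xs \<in> {xs\<in>L. cnt xs = c} \<longleftrightarrow> xs \<in> permutations_of_multiset (Mc n c)"
      proof
        assume "xs \<in> {xs\<in>L. cnt xs = c}"
        thus "xs \<in> permutations_of_multiset (Mc n c)"
          using mset_eq_Mc[OF cP, of xs] by (simp add: L_def cnt_def permutations_of_multiset_def)
      next
        assume "xs \<in> permutations_of_multiset (Mc n c)"
        hence e: "mset xs = Mc n c" by (simp add: permutations_of_multiset_def)
        hence h: "set xs \<subseteq> {..<n}" "cnt xs = c" using mset_eq_Mc[OF cP, of xs] by (simp_all add: cnt_def)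
        have "length xs = t" using e size_Mc[of n c] sc by (metis size_mset)
        moreover have "goodc n A m k (\<lambda>i. count (mset xs) i) = goodc n A m k c"
        proof (rule goodc_cong)
          fix i assume "i < n"
          have "cnt xs i = c i" using h(2) by simp
          thus "count (mset xs) i = c i" using \<open>i < n\<close> by (simp add: cnt_def)
        qed
        ultimately show "xs \<in> {xs\<in>L. cnt xs = c}" using h nc by (simp add: L_def)
      qed
    qed
  qed
  have "card L = (\<Sum>c\<in>Bad n A m k t. card {xs\<in>L. cnt xs = c})"
  proof -
    have "card L = (\<Sum>xs\<in>L. 1)" by simp
    also have "\<dots> = (\<Sum>c\<in>Bad n A m k t. \<Sum>xs\<in>{xs\<in>L. cnt xs = c}. 1)"
      by (rule sum.group[OF finL finite_Bad img, symmetric])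
    finally show ?thesis by simp
  qed
  hence "real (card L) = (\<Sum>c\<in>Bad n A m k t. real (card (permutations_of_multiset (Mc n c))))"
    using fib by simp
  also have "\<dots> = (\<Sum>c\<in>Bad n A m k t. fact t * (1 / (\<Prod>i<n. fact (c i))))"
  proof (rule sum.cong[OF refl])
    fix c assume c: "c \<in> Bad n A m k t"
    have "card (permutations_of_multiset (Mc n c)) * (\<Prod>i<n. fact (c i) :: nat) = fact t"
      using card_permutations_of_multiset_aux[of "Mc n c"] fact_Mc[of n c] size_Mc[of n c] c
      by (simp add: mem_Bad)
    hence "real (card (permutations_of_multiset (Mc n c)) * (\<Prod>i<n. fact (c i) :: nat)) = real (fact t)"
      by (simp only:)
    hence "real (card (permutations_of_multiset (Mc n c))) * (\<Prod>i<n. fact (c i)) = fact t"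
      unfolding of_nat_mult of_nat_prod of_nat_fact .
    moreover have "(\<Prod>i<n. fact (c i) :: real) \<noteq> 0" by simp
    ultimately show "real (card (permutations_of_multiset (Mc n c))) = fact t * (1 / (\<Prod>i<n. fact (c i)))"
      by (simp add: field_simps)
  qed
  also have "\<dots> = fact t * beta n A m k t" by (simp add: beta_def sum_distrib_left)
  finally show ?thesis by (simp add: L_def)
qed

lemma card_lists_Suc:
  fixes n :: nat
  shows "card {xs. length xs = Suc t \<and> set xs \<subseteq> {..<n} \<and> Q xs}
   = (\<Sum>y<n. card {xs. length xs = t \<and> set xs \<subseteq> {..<n} \<and> Q (y # xs)})"
proof -
  define F where "F y = {xs. length xs = t \<and> set xs \<subseteq> {..<n} \<and> Q (y # xs)}" for y
  have finF: "finite (F y)" for y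
  proof -
    have "F y \<subseteq> {xs. set xs \<subseteq> {..<n} \<and> length xs = t}" unfolding F_def by auto
    thus ?thesis by (rule finite_subset[OF _ finite_lists_length_eq[of "{..<n}" t]]) auto
  qed
  have eq: "{xs. length xs = Suc t \<and> set xs \<subseteq> {..<n} \<and> Q xs} = (\<Union>y\<in>{..<n}. (#) y ` F y)"
  proof (rule set_eqI)
    fix xs
    show "xs \<in> {xs. length xs = Suc t \<and> set xs \<subseteq> {..<n} \<and> Q xs} \<longleftrightarrow> xs \<in> (\<Union>y\<in>{..<n}. (#) y ` F y)"
    proof
      assume "xs \<in> {xs. length xs = Suc t \<and> set xs \<subseteq> {..<n} \<and> Q xs}"
      then obtain y ys where "xs = y # ys" "length ys = t" "set (y # ys) \<subseteq> {..<n}" "Q (y # ys)"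
        by (auto simp: length_Suc_conv)
      thus "xs \<in> (\<Union>y\<in>{..<n}. (#) y ` F y)" by (auto simp: F_def)
    qed (auto simp: F_def)
  qed
  have "card (\<Union>y\<in>{..<n}. (#) y ` F y) = (\<Sum>y<n. card ((#) y ` F y))"
    by (rule card_UN_disjoint) (auto simp: finF)
  also have "\<dots> = (\<Sum>y<n. card (F y))" by (intro sum.cong refl card_image) auto
  finally show ?thesis using eq by (simp add: F_def)
qed

lemma sets_coupon: "sets (coupon_space n) = sets (stream_space (count_space UNIV))"
  unfolding coupon_space_def by (rule sets_stream_space_cong) simp

lemma space_coupon: "space (coupon_space n) = UNIV"
  unfolding coupon_space_def by (simp add: space_stream_space)

lemma meas_stake: "stake t \<in> measurable (coupon_space n) (count_space UNIV)"
  using measurable_stake[of t] by (subst measurable_cong_sets[OF sets_coupon refl])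

lemma sets_stake_pred: "{\<omega> \<in> space (coupon_space n). Q (stake t \<omega>)} \<in> sets (coupon_space n)"
proof -
  have "stake t -` {xs. Q xs} \<inter> space (coupon_space n) \<in> sets (coupon_space n)"
    by (rule measurable_sets[OF meas_stake]) simp
  moreover have "stake t -` {xs. Q xs} \<inter> space (coupon_space n) = {\<omega> \<in> space (coupon_space n). Q (stake t \<omega>)}"
    by auto
  ultimately show ?thesis by simp
qed

lemma emeasure_stake:
  assumes n: "1 \<le> n"
  shows "emeasure (coupon_space n) {\<omega> \<in> space (coupon_space n). Q (stake t \<omega>)}
       = ennreal (card {xs. length xs = t \<and> set xs \<subseteq> {..<n} \<and> Q xs} / real n ^ t)"
proof (induction t arbitrary: Q)
  case 0
  interpret S: prob_space "coupon_space n"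
    unfolding coupon_space_def by (rule prob_space.prob_space_stream_space[OF prob_space_measure_pmf])
  show ?case
  proof (cases "Q []")
    case True
    have "{xs. length xs = 0 \<and> set xs \<subseteq> {..<n} \<and> Q xs} = {[]}" using True by auto
    then show ?thesis using True by (simp add: S.emeasure_space_1)
  next
    case False
    have "{xs. length xs = 0 \<and> set xs \<subseteq> {..<n} \<and> Q xs} = {}" using False by auto
    then show ?thesis using False by simp
  qed
next
  case (Suc t)
  define p where "p = pmf_of_set {..<n::nat}"
  have "0 \<in> {..<n}" using n by simp
  hence ne: "{..<n} \<noteq> {}" by blast
  have setp: "set_pmf p = {..<n}" unfolding p_def using ne by simp
  have pmfp: "pmf p y = (if y < n then 1 / real n else 0)" for y unfolding p_def using ne by simp
  have cs: "coupon_space n = stream_space (measure_pmf p)" unfolding coupon_space_def p_def ..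
  define X where "X = {\<omega> \<in> space (coupon_space n). Q (stake (Suc t) \<omega>)}"
  have "emeasure (coupon_space n) X
      = (\<integral>\<^sup>+y. emeasure (coupon_space n) {x\<in>space (coupon_space n). y ## x \<in> X} \<partial>measure_pmf p)"
    unfolding cs by (rule prob_space.emeasure_stream_space[OF prob_space_measure_pmf])
       (use sets_stake_pred[where Q=Q and t="Suc t" and n=n] in \<open>simp add: X_def cs\<close>)
  also have "\<dots> = (\<integral>\<^sup>+y. ennreal (card {xs. length xs = t \<and> set xs \<subseteq> {..<n} \<and> Q (y # xs)} / real n ^ t) \<partial>measure_pmf p)"
  proof (rule nn_integral_cong)
    fix y
    have "{x\<in>space (coupon_space n). y ## x \<in> X} = {x\<in>space (coupon_space n). Q (y # stake t x)}"
      by (simp add: X_def space_coupon)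
    thus "emeasure (coupon_space n) {x\<in>space (coupon_space n). y ## x \<in> X}
        = ennreal (card {xs. length xs = t \<and> set xs \<subseteq> {..<n} \<and> Q (y # xs)} / real n ^ t)"
      using Suc.IH[of "\<lambda>xs. Q (y # xs)"] by simp
  qed
  also have "\<dots> = (\<Sum>y<n. ennreal (card {xs. length xs = t \<and> set xs \<subseteq> {..<n} \<and> Q (y # xs)} / real n ^ t) * pmf p y)"
    by (subst nn_integral_measure_pmf_finite) (simp_all add: setp)
  also have "\<dots> = (\<Sum>y<n. ennreal (card {xs. length xs = t \<and> set xs \<subseteq> {..<n} \<and> Q (y # xs)} / real n ^ Suc t))"
    by (intro sum.cong refl) (simp add: pmfp ennreal_mult[symmetric] field_simps)
  also have "\<dots> = ennreal (\<Sum>y<n. card {xs. length xs = t \<and> set xs \<subseteq> {..<n} \<and> Q (y # xs)} / real n ^ Suc t)"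
    by (rule sum_ennreal) simp
  also have "\<dots> = ennreal (card {xs. length xs = Suc t \<and> set xs \<subseteq> {..<n} \<and> Q xs} / real n ^ Suc t)"
    by (simp add: card_lists_Suc sum_divide_distrib[symmetric])
  finally show ?case by (simp add: X_def)
qed

lemma goal_mono:
  assumes "goal_reached n A m k \<omega> t" "t \<le> t'"
  shows "goal_reached n A m k \<omega> t'"
proof -
  obtain d where d: "t' = t + d" using assms(2) le_Suc_ex by blast
  have le: "count (mset (stake t \<omega>)) c \<le> count (mset (stake t' \<omega>)) c" for c
  proof -
    have e: "stake (t + d) \<omega> = stake t \<omega> @ stake d (sdrop t \<omega>)" by (rule stake_add[symmetric])
    show ?thesis unfolding d e by (simp del: stake_add)
  qed
  have "card {c\<in>{..<n}. m j \<le> enat (count (mset (stake t \<omega>)) c)}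
     \<le> card {c\<in>{..<n}. m j \<le> enat (count (mset (stake t' \<omega>)) c)}" for j
    by (rule card_mono) (auto intro: order_trans[OF _ enat_ord_simps(1)[THEN iffD2, OF le]])
  thus ?thesis using assms(1) unfolding goal_reached_def by (meson order_trans)
qed

lemma U_sum: "U n A m k \<omega> = (\<Sum>t. indicator {\<omega>. \<not> goal_reached n A m k \<omega> t} \<omega>)"
proof (cases "\<exists>t. goal_reached n A m k \<omega> t")
  case True
  define t0 where "t0 = (LEAST t. goal_reached n A m k \<omega> t)"
  have g0: "goal_reached n A m k \<omega> t0" unfolding t0_def using True by (metis LeastI)
  have iff: "\<not> goal_reached n A m k \<omega> t \<longleftrightarrow> t < t0" for t
    using goal_mono[OF g0, of t] not_less_Least[of t "goal_reached n A m k \<omega>"]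
    unfolding t0_def[symmetric] by (cases "t < t0") auto
  have "(\<Sum>t. indicator {\<omega>. \<not> goal_reached n A m k \<omega> t} \<omega> :: ennreal) = (\<Sum>t\<in>{..<t0}. 1)"
    by (subst suminf_finite[of "{..<t0}"]) (auto simp: iff)
  also have "\<dots> = of_nat t0" by simp
  finally show ?thesis using True by (simp add: U_def t0_def)
next
  case False
  have "(\<Sum>t. indicator {\<omega>. \<not> goal_reached n A m k \<omega> t} \<omega> :: ennreal) = (\<Sum>t. 1)"
    using False by simp
  also have "\<dots> = emeasure (count_space (UNIV::nat set)) UNIV"
    using nn_integral_count_space_nat[of "\<lambda>_. 1::ennreal"] by simp
  also have "\<dots> = \<top>" by (simp add: emeasure_count_space_infinite)
  finally show ?thesis using False by (simp add: U_def)
qed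

lemma LHS:
  assumes n: "1 \<le> n"
  shows "(\<integral>\<^sup>+ \<omega>. U n A m k \<omega> \<partial>coupon_space n)
       = (\<Sum>t. ennreal (card {xs. length xs = t \<and> set xs \<subseteq> {..<n} \<and> \<not> goodc n A m k (\<lambda>i. count (mset xs) i)} / real n ^ t))"
proof -
  have gr: "goal_reached n A m k \<omega> t \<longleftrightarrow> goodc n A m k (\<lambda>i. count (mset (stake t \<omega>)) i)" for \<omega> t
    by (simp add: goal_reached_def goodc_def)
  have setq: "{\<omega>. \<not> goal_reached n A m k \<omega> t} = {\<omega> \<in> space (coupon_space n). \<not> goodc n A m k (\<lambda>i. count (mset (stake t \<omega>)) i)}" for t
    by (simp add: gr space_coupon)
  have "(\<integral>\<^sup>+ \<omega>. U n A m k \<omega> \<partial>coupon_space n) = (\<integral>\<^sup>+ \<omega>. (\<Sum>t. indicator {\<omega>. \<not> goal_reached n A m k \<omega> t} \<omega>) \<partial>coupon_space n)"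
    by (simp add: U_sum)
  also have "\<dots> = (\<Sum>t. \<integral>\<^sup>+ \<omega>. indicator {\<omega>. \<not> goal_reached n A m k \<omega> t} \<omega> \<partial>coupon_space n)"
    by (rule nn_integral_suminf) (intro borel_measurable_indicator, simp add: setq sets_stake_pred[where Q="\<lambda>xs. \<not> goodc n A m k (\<lambda>i. count (mset xs) i)" and n=n])
  also have "\<dots> = (\<Sum>t. emeasure (coupon_space n) {\<omega>. \<not> goal_reached n A m k \<omega> t})"
    by (intro suminf_cong nn_integral_indicator) (simp add: setq sets_stake_pred[where Q="\<lambda>xs. \<not> goodc n A m k (\<lambda>i. count (mset xs) i)" and n=n])
  also have "\<dots> = (\<Sum>t. ennreal (card {xs. length xs = t \<and> set xs \<subseteq> {..<n} \<and> \<not> goodc n A m k (\<lambda>i. count (mset xs) i)} / real n ^ t))"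
    unfolding setq by (subst emeasure_stake[OF n]) simp
  finally show ?thesis .
qed

lemma beta_nonneg: "0 \<le> beta n A m k t"
  unfolding beta_def by (intro sum_nonneg divide_nonneg_nonneg prod_nonneg) auto

lemma erlang_int: "(\<integral>\<^sup>+x. ennreal (erlang_density t l x) \<partial>lborel) = 1" if "0 < l" for l :: real
proof -
  interpret prob_space "density lborel (erlang_density t l)" by (rule prob_space_erlang_density[OF that])
  have "emeasure (density lborel (erlang_density t l)) UNIV = 1" using emeasure_space_1 by simp
  thus ?thesis by (subst (asm) emeasure_density) auto
qed

lemma RHS:
  fixes n :: nat
  assumes m0: "m 0 = \<infinity>" and mA: "m (Suc A) = 0" and dec: "\<And>j. j \<le> A \<Longrightarrow> m (Suc j) < m j"
    and n: "1 \<le> n"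
  shows "ennreal (real n) * (\<integral>\<^sup>+ x\<in>{0..}. ennreal (1 - phi m k A n x) \<partial>lborel)
       = (\<Sum>t. ennreal (fact t * beta n A m k t / real n ^ t))"
proof -
  define tm where "tm t x = exp (- (real n * x)) * (x ^ t * beta n A m k t)" for t x
  have npos: "0 < real n" using n by simp
  have pt: "ennreal (1 - phi m k A n x) * indicator {0..} x = (\<Sum>t. ennreal (tm t x) * indicator {0..} x)" for x :: real
  proof (cases "0 \<le> x")
    case True
    have s: "(\<lambda>t. tm t x) sums (1 - phi m k A n x)"
      unfolding tm_def by (rule analytic[OF m0 mA dec True])
    have "(\<Sum>t. ennreal (tm t x)) = ennreal (\<Sum>t. tm t x)"
      using s True beta_nonneg by (intro suminf_ennreal2) (auto simp: tm_def sums_iff)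
    also have "(\<Sum>t. tm t x) = 1 - phi m k A n x" using s by (simp add: sums_iff)
    finally show ?thesis using True by simp
  next
    case False then show ?thesis by simp
  qed
  have ti: "(\<integral>\<^sup>+x. ennreal (tm t x) * indicator {0..} x \<partial>lborel) = ennreal (beta n A m k t * fact t / real n ^ Suc t)" for t
  proof -
    have "(\<integral>\<^sup>+x. ennreal (tm t x) * indicator {0..} x \<partial>lborel)
        = (\<integral>\<^sup>+x. ennreal (beta n A m k t * fact t / real n ^ Suc t) * ennreal (erlang_density t (real n) x) \<partial>lborel)"
    proof (rule nn_integral_cong)
      fix x :: real
      show "ennreal (tm t x) * indicator {0..} x = ennreal (beta n A m k t * fact t / real n ^ Suc t) * ennreal (erlang_density t (real n) x)"
      proof (cases "0 \<le> x")
        case True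
        have "tm t x = beta n A m k t * fact t / real n ^ Suc t * erlang_density t (real n) x"
          using True npos by (simp add: tm_def erlang_density_def field_simps)
        thus ?thesis using True npos beta_nonneg by (simp add: ennreal_mult[symmetric])
      next
        case False then show ?thesis by (simp add: erlang_density_def)
      qed
    qed
    also have "\<dots> = ennreal (beta n A m k t * fact t / real n ^ Suc t) * (\<integral>\<^sup>+x. ennreal (erlang_density t (real n) x) \<partial>lborel)"
      by (rule nn_integral_cmult) simp
    also have "\<dots> = ennreal (beta n A m k t * fact t / real n ^ Suc t)" using erlang_int[OF npos] by simp
    finally show ?thesis .
  qed
  have "(\<integral>\<^sup>+ x\<in>{0..}. ennreal (1 - phi m k A n x) \<partial>lborel) = (\<integral>\<^sup>+x. (\<Sum>t. ennreal (tm t x) * indicator {0..} x) \<partial>lborel)"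
    by (simp add: pt)
  also have "\<dots> = (\<Sum>t. \<integral>\<^sup>+x. ennreal (tm t x) * indicator {0..} x \<partial>lborel)"
    by (rule nn_integral_suminf) (simp add: tm_def)
  also have "\<dots> = (\<Sum>t. ennreal (beta n A m k t * fact t / real n ^ Suc t))" by (simp add: ti)
  finally have "ennreal (real n) * (\<integral>\<^sup>+ x\<in>{0..}. ennreal (1 - phi m k A n x) \<partial>lborel)
      = (\<Sum>t. ennreal (real n) * ennreal (beta n A m k t * fact t / real n ^ Suc t))" by simp
  also have "\<dots> = (\<Sum>t. ennreal (fact t * beta n A m k t / real n ^ t))"
    using npos beta_nonneg by (intro suminf_cong) (simp add: ennreal_mult[symmetric] field_simps)
  finally show ?thesis .
qed

theorem corollary2:
  fixes n A :: nat and k :: "nat \<Rightarrow> nat" and m :: "nat \<Rightarrow> enat"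
  assumes "n \<ge> 1" and "1 \<le> A" and "A \<le> n"
    and "1 \<le> k 1" and "\<And>j. 1 \<le> j \<Longrightarrow> j < A \<Longrightarrow> k j < k (Suc j)" and "k A \<le> n"
    and "k (Suc A) = n"
    and "m 0 = \<infinity>" and "m (Suc A) = 0"
    and "\<And>j. j \<le> A \<Longrightarrow> m (Suc j) < m j"
  shows "(\<integral>\<^sup>+ \<omega>. U n A m k \<omega> \<partial>coupon_space n)
         = ennreal (real n) * (\<integral>\<^sup>+ x\<in>{0..}. ennreal (1 - phi m k A n x) \<partial>lborel)"
proof -
  have "(\<integral>\<^sup>+ \<omega>. U n A m k \<omega> \<partial>coupon_space n)
       = (\<Sum>t. ennreal (card {xs. length xs = t \<and> set xs \<subseteq> {..<n} \<and> \<not> goodc n A m k (\<lambda>i. count (mset xs) i)} / real n ^ t))"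
    by (rule LHS) (use assms in simp)
  also have "\<dots> = (\<Sum>t. ennreal (fact t * beta n A m k t / real n ^ t))"
    by (simp only: card_lists_bad)
  also have "\<dots> = ennreal (real n) * (\<integral>\<^sup>+ x\<in>{0..}. ennreal (1 - phi m k A n x) \<partial>lborel)"
    by (rule RHS[symmetric]) (use assms in auto)
  finally show ?thesis .
qed

end
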